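(* Let $\Pi$ be a $3$-decomposable $30$-half-period with classes $A,B,C$. Then $N_k^{bi}(\Pi)=30$ for $k=11,12,13,14$.
   Context: An allowable sequence on an $n$-element set is a doubly infinite sequence of permutations of the set (lists on positions $1,\dots,n$) in which consecutive permutations differ by swapping two adjacent elements (a transposition) and $\pi_{i+\binom n2}$ is the reverse of $\pi_i$; an $n$-half-period is a block $(\pi_0,\dots,\pi_{\binom n2})$ of consecutive permutations (each pair of elements is swapped exactly once in it). A transposition swapping the elements in positions $i,i+1$ is an $i$-transposition; for $1\le k\le n/2$ it is $k$-critical if it is a $k$-transposition or an $(n-k)$-transposition. An $n$-half-period $\Pi$ ($3\mid n$) is $3$-decomposable if its elements can be labeled $A=\{a_1,\dots,a_{n/3}\}$, $B=\{b_1,\dots,b_{n/3}\}$, $C=\{c_1,\dots,c_{n/3}\}$ so that its first permutation is $(a_{n/3},\dots,a_1,b_1,\dots,b_{n/3},c_1,\dots,c_{n/3})$, every transposition between an element of $A$ and an element of $B$ occurs before every transposition between an element of $C$ and an element of $A\cup B$, and every transposition between $A$ and $C$ occurs before every transposition between $B$ and $C$. A transposition is bichromatic if its two elements lie in different classes among $A,B,C$. $N_k^{bi}(\Pi)$ is the number of bichromatic $k$-critical transpositions of $\Pi$. *)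

theory Defs
  imports Main
begin

text \<open>Permutations of an n-element set are lists of n distinct elements (positions 0..n-1
  in Isabelle, i.e. positions 1..n of the paper shifted by one).\<close>

definition adj_swap :: "'a list \<Rightarrow> nat \<Rightarrow> 'a list" where
  "adj_swap xs j = xs[j := xs ! Suc j, Suc j := xs ! j]"

text \<open>0-based position j of the transposition performed between P!s and P!(s+1);
  it swaps the paper's positions j+1, j+2, i.e. it is a (j+1)-transposition.\<close>
definition swap_pos :: "'a list list \<Rightarrow> nat \<Rightarrow> nat" where
  "swap_pos P s = (THE j. Suc j < length (P ! s) \<and> P ! Suc s = adj_swap (P ! s) j)"

definition swapped :: "'a list list \<Rightarrow> nat \<Rightarrow> 'a set" where
  "swapped P s = {P ! s ! swap_pos P s, P ! s ! Suc (swap_pos P s)}"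

definition half_period :: "nat \<Rightarrow> 'a list list \<Rightarrow> bool" where
  "half_period n P \<longleftrightarrow>
     length P = (n choose 2) + 1 \<and>
     (\<forall>\<pi>\<in>set P. distinct \<pi> \<and> length \<pi> = n) \<and>
     (\<forall>s < n choose 2. \<exists>j. Suc j < n \<and> P ! Suc s = adj_swap (P ! s) j) \<and>
     (\<forall>x\<in>set (P ! 0). \<forall>y\<in>set (P ! 0). x \<noteq> y \<longrightarrow>
        card {s. s < n choose 2 \<and> swapped P s = {x, y}} = 1)"

definition between :: "'a set \<Rightarrow> 'a set \<Rightarrow> 'a set \<Rightarrow> bool" where
  "between X Y e \<longleftrightarrow> (\<exists>x\<in>X. \<exists>y\<in>Y. e = {x, y})"

definition three_decomposable :: "nat \<Rightarrow> 'a list list \<Rightarrow> 'a set \<Rightarrow> 'a set \<Rightarrow> 'a set \<Rightarrow> bool" where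
  "three_decomposable n P A B C \<longleftrightarrow>
     3 dvd n \<and> half_period n P \<and>
     (\<exists>a b c :: nat \<Rightarrow> 'a.
        A = a ` {1..n div 3} \<and> B = b ` {1..n div 3} \<and> C = c ` {1..n div 3} \<and>
        P ! 0 = rev (map a [1..<n div 3 + 1]) @ map b [1..<n div 3 + 1] @ map c [1..<n div 3 + 1]) \<and>
     (\<forall>s < n choose 2. \<forall>t < n choose 2.
        between A B (swapped P s) \<and> between C (A \<union> B) (swapped P t) \<longrightarrow> s < t) \<and>
     (\<forall>s < n choose 2. \<forall>t < n choose 2.
        between A C (swapped P s) \<and> between B C (swapped P t) \<longrightarrow> s < t)"

text \<open>k-critical: a k-transposition or an (n-k)-transposition (1-based index = swap_pos + 1).\<close>
definition critical :: "nat \<Rightarrow> nat \<Rightarrow> 'a list list \<Rightarrow> nat \<Rightarrow> bool" where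
  "critical n k P s \<longleftrightarrow> Suc (swap_pos P s) = k \<or> Suc (swap_pos P s) = n - k"

definition bichromatic :: "'a set \<Rightarrow> 'a set \<Rightarrow> 'a set \<Rightarrow> 'a set \<Rightarrow> bool" where
  "bichromatic A B C e \<longleftrightarrow> \<not> (e \<subseteq> A \<or> e \<subseteq> B \<or> e \<subseteq> C)"

definition N_bi :: "nat \<Rightarrow> nat \<Rightarrow> 'a list list \<Rightarrow> 'a set \<Rightarrow> 'a set \<Rightarrow> 'a set \<Rightarrow> nat" where
  "N_bi n k P A B C =
     card {s. s < n choose 2 \<and> critical n k P s \<and> bichromatic A B C (swapped P s)}"

end

theory Submission imports Defs begin


lemma adj_swap_len[simp]: "length (adj_swap xs j) = length xs"
  by (simp add: adj_swap_def)

lemma adj_swap_nth: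
  assumes "Suc j < length xs" "i < length xs"
  shows "adj_swap xs j ! i = (if i = j then xs ! Suc j else if i = Suc j then xs ! j else xs ! i)"
  using assms by (auto simp: adj_swap_def nth_list_update)

lemma adj_swap_set:
  assumes "Suc j < length xs"
  shows "set (adj_swap xs j) = set xs"
  using assms by (simp add: adj_swap_def)

lemma adj_swap_distinct:
  assumes "Suc j < length xs" "distinct xs"
  shows "distinct (adj_swap xs j)"
  using assms by (simp add: adj_swap_def)

lemma adj_swap_inj:
  assumes "distinct xs" "Suc j < length xs" "Suc j' < length xs" "adj_swap xs j = adj_swap xs j'"
  shows "j = j'"
proof (rule ccontr)
  assume ne: "j \<noteq> j'"
  have "adj_swap xs j ! j = adj_swap xs j' ! j" using assms by simp
  hence "xs ! Suc j = (if j = Suc j' then xs ! j' else xs ! j)"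
    using assms(1-3) ne by (simp add: adj_swap_nth)
  moreover have "j = Suc j' \<Longrightarrow> xs ! Suc j \<noteq> xs ! j'" "xs ! Suc j \<noteq> xs ! j"
    using assms(1,2) by (simp_all add: nth_eq_iff_index_eq)
  ultimately show False by (cases "j = Suc j'") auto
qed

locale hp =
  fixes P :: "'a list list" and n N :: nat
  assumes lenP: "length P = Suc N"
  and dist: "\<And>s. s \<le> N \<Longrightarrow> distinct (P!s)"
  and len: "\<And>s. s \<le> N \<Longrightarrow> length (P!s) = n"
  and step: "\<And>s. s < N \<Longrightarrow> \<exists>j. Suc j < n \<and> P!Suc s = adj_swap (P!s) j"
  and once: "\<And>x y. x \<in> set (P!0) \<Longrightarrow> y \<in> set (P!0) \<Longrightarrow> x \<noteq> y \<Longrightarrow>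
      card {s. s < N \<and> swapped P s = {x,y}} = 1"
begin

abbreviation "S \<equiv> set (P!0)"

lemma sp: assumes "s < N"
  shows "Suc (swap_pos P s) < n \<and> P!Suc s = adj_swap (P!s) (swap_pos P s)"
proof -
  obtain j where j: "Suc j < n" "P!Suc s = adj_swap (P!s) j" using step[OF assms] by blast
  have u: "\<And>j'. Suc j' < length (P!s) \<and> P!Suc s = adj_swap (P!s) j' \<Longrightarrow> j' = j"
    using adj_swap_inj[of "P!s"] j dist[of s] len[of s] assms by auto
  have "swap_pos P s = j" unfolding swap_pos_def
    apply (rule the_equality)
    subgoal using j len[of s] assms by simp
    subgoal for j' using u by blast
    done
  thus ?thesis using j by simp
qed

lemma setP: "s \<le> N \<Longrightarrow> set (P!s) = S"
proof (induction s)
  case (Suc s)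
  have "s < N" using Suc by simp
  hence "set (P!Suc s) = set (P!s)" using sp[of s] adj_swap_set[of "swap_pos P s" "P!s"] len[of s] by simp
  then show ?case using Suc by simp
qed simp

definition pos :: "nat \<Rightarrow> 'a \<Rightarrow> nat" where
  "pos s x = (THE i. i < n \<and> P!s!i = x)"

lemma pos_nth: assumes "s \<le> N" "i < n" shows "pos s (P!s!i) = i"
  unfolding pos_def
  apply (rule the_equality)
  subgoal using assms by simp
  subgoal for j using assms dist[of s] len[of s] nth_eq_iff_index_eq[of "P!s" j i] by simp
  done

lemma pos_lt: assumes "s \<le> N" "x \<in> S" shows "pos s x < n \<and> P!s!(pos s x) = x"
proof -
  obtain i where "i < n" "P!s!i = x" using assms setP[of s] len[of s] by (metis in_set_conv_nth)
  thus ?thesis using pos_nth[OF assms(1)] by auto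
qed

lemma pos_inj: assumes "s \<le> N" shows "inj_on (pos s) S"
proof (rule inj_onI)
  fix x y assume "x \<in> S" "y \<in> S" "pos s x = pos s y"
  thus "x = y" using pos_lt[OF assms, of x] pos_lt[OF assms, of y] by metis
qed

lemma swapped_eq: "swapped P s = {P!s!swap_pos P s, P!s!Suc (swap_pos P s)}"
  by (simp add: swapped_def)

lemma sw_in: assumes "s < N"
  shows "P!s!swap_pos P s \<in> S" "P!s!Suc (swap_pos P s) \<in> S"
    "P!s!swap_pos P s \<noteq> P!s!Suc (swap_pos P s)"
proof -
  have a: "Suc (swap_pos P s) < length (P!s)" "distinct (P!s)" "set (P!s) = S"
    using sp[OF assms] setP[of s] len[of s] dist[of s] assms by auto
  show "P!s!swap_pos P s \<in> S" using a nth_mem[of "swap_pos P s" "P!s"] by simp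
  show "P!s!Suc (swap_pos P s) \<in> S" using a nth_mem[of "Suc (swap_pos P s)" "P!s"] by simp
  show "P!s!swap_pos P s \<noteq> P!s!Suc (swap_pos P s)" using a by (simp add: nth_eq_iff_index_eq)
qed

lemma pos_step:
  assumes "s < N" "x \<in> S"
  shows "pos (Suc s) x = (if x = P!s!swap_pos P s then Suc (swap_pos P s)
      else if x = P!s!Suc (swap_pos P s) then swap_pos P s else pos s x)"
proof -
  define j where "j = swap_pos P s"
  have j: "Suc j < n" "P!Suc s = adj_swap (P!s) j" using sp[OF assms(1)] j_def by auto
  have L: "length (P!s) = n" using len assms by simp
  have a: "P!Suc s ! Suc j = P!s!j" "P!Suc s ! j = P!s!Suc j"
    using j L by (auto simp: adj_swap_nth)
  show ?thesis
  proof (cases "x = P!s!j")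
    case True
    then show ?thesis using pos_nth[of "Suc s" "Suc j"] a j assms j_def by simp
  next
    case F1: False
    show ?thesis
    proof (cases "x = P!s!Suc j")
      case True
      then show ?thesis using pos_nth[of "Suc s" "j"] a j assms j_def F1 by simp
    next
      case False
      have p: "pos s x < n" "P!s!pos s x = x" using pos_lt[of s x] assms by auto
      have "pos s x \<noteq> j" "pos s x \<noteq> Suc j" using p F1 False by auto
      hence "P!Suc s ! pos s x = x" using j p L by (simp add: adj_swap_nth)
      hence "pos (Suc s) x = pos s x" using pos_nth[of "Suc s" "pos s x"] p assms by simp
      thus ?thesis using F1 False j_def by simp
    qed
  qed
qed


lemma ord_step_other:
  assumes "s < N" "x \<in> S" "y \<in> S" "x \<noteq> y" "swapped P s \<noteq> {x,y}"
  shows "(pos (Suc s) x < pos (Suc s) y) = (pos s x < pos s y)"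
proof -
  define j where "j = swap_pos P s"
  define u where "u = P!s!j"
  define v where "v = P!s!Suc j"
  have j: "Suc j < n" using sp[OF assms(1)] j_def by simp
  have uv: "u \<in> S" "v \<in> S" "u \<noteq> v" using sw_in[OF assms(1)] u_def v_def j_def by auto
  have pu: "pos s u = j" "pos s v = Suc j" using pos_nth[of s j] pos_nth[of s "Suc j"] j assms(1)
    u_def v_def by auto
  have px: "pos s x = j \<longleftrightarrow> x = u" "pos s x = Suc j \<longleftrightarrow> x = v"
    "pos s y = j \<longleftrightarrow> y = u" "pos s y = Suc j \<longleftrightarrow> y = v"
    using pos_lt[of s x] pos_lt[of s y] assms pu u_def v_def by auto
  have ne: "{x,y} \<noteq> {u,v}" using assms(5) u_def v_def j_def swapped_eq[of s] by simp
  have sx: "pos (Suc s) x = (if x = u then Suc j else if x = v then j else pos s x)"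
    using pos_step[OF assms(1,2)] u_def v_def j_def by simp
  have sy: "pos (Suc s) y = (if y = u then Suc j else if y = v then j else pos s y)"
    using pos_step[OF assms(1,3)] u_def v_def j_def by simp
  show ?thesis unfolding sx sy using px ne assms(4) uv(3) pu
    by (cases "x = u"; cases "x = v"; cases "y = u"; cases "y = v"; auto)
qed

lemma ord_step_swap:
  assumes "s < N" "x \<in> S" "y \<in> S" "x \<noteq> y" "swapped P s = {x,y}"
  shows "(pos (Suc s) x < pos (Suc s) y) = (pos s y < pos s x)"
proof -
  define j where "j = swap_pos P s"
  define u where "u = P!s!j"
  define v where "v = P!s!Suc j"
  have j: "Suc j < n" using sp[OF assms(1)] j_def by simp
  have uv: "u \<noteq> v" using sw_in[OF assms(1)] u_def v_def j_def by auto
  have pu: "pos s u = j" "pos s v = Suc j" using pos_nth[of s j] pos_nth[of s "Suc j"] j assms(1)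
    u_def v_def by auto
  have e: "{x,y} = {u,v}" using assms(5) u_def v_def j_def swapped_eq[of s] by simp
  have sx: "pos (Suc s) x = (if x = u then Suc j else if x = v then j else pos s x)"
    using pos_step[OF assms(1,2)] u_def v_def j_def by simp
  have sy: "pos (Suc s) y = (if y = u then Suc j else if y = v then j else pos s y)"
    using pos_step[OF assms(1,3)] u_def v_def j_def by simp
  have "(x = u \<and> y = v) \<or> (x = v \<and> y = u)" using e assms(4) by (auto simp: doubleton_eq_iff)
  thus ?thesis unfolding sx sy using pu uv by auto
qed

lemma ord_inv:
  assumes "s1 \<le> s2" "s2 \<le> N" "x \<in> S" "y \<in> S" "x \<noteq> y"
    "\<And>t. s1 \<le> t \<Longrightarrow> t < s2 \<Longrightarrow> swapped P t \<noteq> {x,y}"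
  shows "(pos s2 x < pos s2 y) = (pos s1 x < pos s1 y)"
  using assms
proof (induction s2 rule: dec_induct)
  case base
  then show ?case by simp
next
  case (step m)
  have "(pos (Suc m) x < pos (Suc m) y) = (pos m x < pos m y)"
    using ord_step_other[of m x y] step.prems step.hyps by simp
  then show ?case using step by simp
qed

definition sig :: "'a \<Rightarrow> 'a \<Rightarrow> nat" where
  "sig x y = (THE t. t < N \<and> swapped P t = {x,y})"

lemma sig:
  assumes "x \<in> S" "y \<in> S" "x \<noteq> y"
  shows "sig x y < N" "swapped P (sig x y) = {x,y}"
    "\<And>t. t < N \<Longrightarrow> swapped P t = {x,y} \<Longrightarrow> t = sig x y"
proof -
  obtain t0 where t0: "{s. s < N \<and> swapped P s = {x,y}} = {t0}"
    using once[OF assms] by (metis card_1_singletonE)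
  have "sig x y = t0" unfolding sig_def using t0 by (intro the_equality) blast+
  thus "sig x y < N" "swapped P (sig x y) = {x,y}"
    "\<And>t. t < N \<Longrightarrow> swapped P t = {x,y} \<Longrightarrow> t = sig x y" using t0 by blast+
qed

lemma sig_before:
  assumes "x \<in> S" "y \<in> S" "x \<noteq> y" "ta < sig x y"
  shows "swapped P ta \<noteq> {x,y}"
proof
  assume "swapped P ta = {x,y}"
  moreover have "ta < N" using assms sig(1)[OF assms(1-3)] by simp
  ultimately have "ta = sig x y" using sig(3)[OF assms(1-3)] by blast
  thus False using assms by simp
qed

lemma sig_after:
  assumes "x \<in> S" "y \<in> S" "x \<noteq> y" "sig x y < ta" "ta < N"
  shows "swapped P ta \<noteq> {x,y}"
proof
  assume "swapped P ta = {x,y}"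
  hence "ta = sig x y" using sig(3)[OF assms(1-3)] assms(5) by blast
  thus False using assms by simp
qed

lemma ord_at:
  assumes "t \<le> N" "x \<in> S" "y \<in> S" "x \<noteq> y"
  shows "(pos t x < pos t y) = ((pos 0 x < pos 0 y) \<noteq> (sig x y < t))"
proof (cases "sig x y < t")
  case True
  have a: "(pos t x < pos t y) = (pos (Suc (sig x y)) x < pos (Suc (sig x y)) y)"
  proof (rule ord_inv)
    fix ta assume h: "Suc (sig x y) \<le> ta" "ta < t"
    show "swapped P ta \<noteq> {x,y}"
      using sig_after[OF assms(2-4), of ta] h assms(1) by simp
  qed (use True assms in simp_all)
  have b: "(pos (Suc (sig x y)) x < pos (Suc (sig x y)) y) = (pos (sig x y) y < pos (sig x y) x)"
    using ord_step_swap[of "sig x y" x y] sig(1,2)[OF assms(2-4)] assms by simp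
  have c: "(pos (sig x y) x < pos (sig x y) y) = (pos 0 x < pos 0 y)"
  proof (rule ord_inv)
    fix ta assume h: "0 \<le> ta" "ta < sig x y"
    show "swapped P ta \<noteq> {x,y}" using sig_before[OF assms(2-4) h(2)] .
  qed (use sig(1)[OF assms(2-4)] assms in simp_all)
  have d: "pos (sig x y) x \<noteq> pos (sig x y) y"
  proof
    assume "pos (sig x y) x = pos (sig x y) y"
    hence "x = y" using inj_onD[OF pos_inj[of "sig x y"]] sig(1)[OF assms(2-4)] assms by simp
    thus False using assms by simp
  qed
  show ?thesis using a b c d True by auto
next
  case False
  have "(pos t x < pos t y) = (pos 0 x < pos 0 y)"
  proof (rule ord_inv)
    fix ta assume h: "0 \<le> ta" "ta < t"
    show "swapped P ta \<noteq> {x,y}" using sig_before[OF assms(2-4)] h False by simp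
  qed (use assms in simp_all)
  thus ?thesis using False by simp
qed

lemma orient:
  assumes "s < N"
  shows "pos 0 (P!s!swap_pos P s) < pos 0 (P!s!Suc (swap_pos P s))"
proof -
  define j where "j = swap_pos P s"
  define u where "u = P!s!j"
  define v where "v = P!s!Suc j"
  have j: "Suc j < n" using sp[OF assms(1)] j_def by simp
  have uv: "u \<in> S" "v \<in> S" "u \<noteq> v" using sw_in[OF assms(1)] u_def v_def j_def by auto
  have pu: "pos s u = j" "pos s v = Suc j" using pos_nth[of s j] pos_nth[of s "Suc j"] j assms(1)
    u_def v_def by auto
  have "swapped P s = {u,v}" using swapped_eq[of s] u_def v_def j_def by simp
  hence "sig u v = s" using sig(3)[OF uv] assms by simp
  hence "(pos s u < pos s v) = (pos 0 u < pos 0 v)" using ord_at[of s u v] uv assms by simp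
  thus ?thesis using pu u_def v_def j_def by simp
qed


lemma phase_step:
  assumes "m < N" "Y \<subseteq> S" "X \<inter> Y = {}"
  and H1: "\<And>z w. swapped P m = {z,w} \<Longrightarrow> w \<in> Y \<Longrightarrow> z \<in> X \<union> Y"
  and H2: "\<And>x y. x \<in> X \<Longrightarrow> y \<in> Y \<Longrightarrow> pos 0 x < pos 0 y"
  shows "card {y\<in>Y. pos (Suc m) y < Suc j} =
    card {y\<in>Y. pos m y < Suc j} + (if swap_pos P m = j \<and> between X Y (swapped P m) then 1 else 0)"
proof -
  define J where "J = swap_pos P m"
  define u where "u = P!m!J"
  define v where "v = P!m!Suc J"
  have jn: "Suc J < n" using sp[OF assms(1)] J_def by simp
  have uv: "u \<in> S" "v \<in> S" "u \<noteq> v" using sw_in[OF assms(1)] u_def v_def J_def by auto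
  have pu: "pos m u = J" "pos m v = Suc J" using pos_nth[of m J] pos_nth[of m "Suc J"] jn assms(1)
    u_def v_def by auto
  have px: "\<And>y. y \<in> S \<Longrightarrow> pos m y = J \<longleftrightarrow> y = u" "\<And>y. y \<in> S \<Longrightarrow> pos m y = Suc J \<longleftrightarrow> y = v"
  proof -
    fix y assume "y \<in> S"
    hence "P!m!pos m y = y" using pos_lt[of m y] assms(1) by simp
    thus "pos m y = J \<longleftrightarrow> y = u" "pos m y = Suc J \<longleftrightarrow> y = v" using pu u_def v_def by auto
  qed
  have ps: "\<And>y. y \<in> S \<Longrightarrow> pos (Suc m) y = (if y = u then Suc J else if y = v then J else pos m y)"
    using pos_step[OF assms(1)] u_def v_def J_def by simp
  have sw: "swapped P m = {u,v}" using swapped_eq[of m] u_def v_def J_def by simp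
  have ori: "pos 0 u < pos 0 v" using orient[OF assms(1)] u_def v_def J_def by simp
  have fin: "finite {y\<in>Y. pos m y < Suc j}" using assms(2) finite_subset[of _ S] by auto
  show ?thesis
  proof (cases "J = j")
    case False
    have "\<And>y. y \<in> Y \<Longrightarrow> (pos (Suc m) y < Suc j) = (pos m y < Suc j)"
    proof -
      fix y assume "y \<in> Y"
      hence yS: "y \<in> S" using assms(2) by auto
      show "(pos (Suc m) y < Suc j) = (pos m y < Suc j)"
      proof (cases "y = u")
        case True thus ?thesis using ps[OF yS] pu False by auto
      next
        case F2: False
        thus ?thesis using ps[OF yS] pu False by (cases "y = v") auto
      qed
    qed
    hence "{y\<in>Y. pos (Suc m) y < Suc j} = {y\<in>Y. pos m y < Suc j}" by auto
    thus ?thesis using False J_def by simp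
  next
    case True
    have new: "{y\<in>Y. pos (Suc m) y < Suc j} = ({y\<in>Y. pos m y < Suc j} - {u}) \<union> ({v} \<inter> Y)"
    proof -
      have "\<And>y. y \<in> Y \<Longrightarrow> y \<noteq> u \<Longrightarrow> y \<noteq> v \<Longrightarrow> (pos (Suc m) y < Suc j) = (pos m y < Suc j)"
      proof -
        fix y assume y: "y \<in> Y" "y \<noteq> u" "y \<noteq> v"
        have "y \<in> S" using y assms(2) by auto
        hence "pos m y \<noteq> J" "pos m y \<noteq> Suc J" "pos (Suc m) y = pos m y" using px ps y by auto
        thus "(pos (Suc m) y < Suc j) = (pos m y < Suc j)" using True by auto
      qed
      moreover have "pos (Suc m) u = Suc j" "pos (Suc m) v = j" using ps uv True by auto
      ultimately show ?thesis using uv(3) pu True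
        apply (intro set_eqI)
        subgoal for y by (cases "y = u"; cases "y = v") auto
        done
    qed
    have uin: "u \<in> Y \<Longrightarrow> u \<in> {y\<in>Y. pos m y < Suc j}" using pu True by simp
    have vout: "v \<notin> {y\<in>Y. pos m y < Suc j}" using pu True by simp
    show ?thesis
    proof (cases "u \<in> Y")
      case uY: True
      have "v \<in> X \<union> Y" using H1[of v u] sw uY by (simp add: insert_commute)
      moreover have "v \<notin> X" using H2[of v u] uY ori by auto
      ultimately have vY: "v \<in> Y" by simp
      have nb: "\<not> between X Y (swapped P m)" using sw uY vY assms(3)
        unfolding between_def by (auto simp: doubleton_eq_iff)
      have "card {y\<in>Y. pos (Suc m) y < Suc j} = card {y\<in>Y. pos m y < Suc j}"
      proof -
        have "card {y\<in>Y. pos m y < Suc j} > 0" using fin uin[OF uY] card_gt_0_iff by blast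
        thus ?thesis unfolding new using vY vout uin[OF uY] fin
        by (simp add: card_insert_if)
      qed
      thus ?thesis using nb by simp
    next
      case uY: False
      show ?thesis
      proof (cases "v \<in> Y")
        case vY: True
        have uX: "u \<in> X" using H1[of u v] sw vY uY by simp
        have b: "between X Y (swapped P m)" using sw uX vY unfolding between_def by auto
        have "{y\<in>Y. pos (Suc m) y < Suc j} = insert v {y\<in>Y. pos m y < Suc j}"
          unfolding new using uY vY by auto
        hence "card {y\<in>Y. pos (Suc m) y < Suc j} = Suc (card {y\<in>Y. pos m y < Suc j})"
          using fin vout by simp
        thus ?thesis using b True J_def by simp
      next
        case vY: False
        have nb: "\<not> between X Y (swapped P m)" using sw uY vY
          unfolding between_def by (auto simp: doubleton_eq_iff)
        have "{y\<in>Y. pos (Suc m) y < Suc j} = {y\<in>Y. pos m y < Suc j}"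
          unfolding new using uY vY by auto
        thus ?thesis using nb by simp
      qed
    qed
  qed
qed

lemma phase:
  assumes "s0 \<le> s1" "s1 \<le> N" "Y \<subseteq> S" "X \<inter> Y = {}"
  and H1: "\<And>s z w. s0 \<le> s \<Longrightarrow> s < s1 \<Longrightarrow> swapped P s = {z,w} \<Longrightarrow> w \<in> Y \<Longrightarrow> z \<in> X \<union> Y"
  and H2: "\<And>x y. x \<in> X \<Longrightarrow> y \<in> Y \<Longrightarrow> pos 0 x < pos 0 y"
  shows "card {s. s0 \<le> s \<and> s < s1 \<and> swap_pos P s = j \<and> between X Y (swapped P s)}
    + card {y\<in>Y. pos s0 y < Suc j} = card {y\<in>Y. pos s1 y < Suc j}"
  using assms(1,2,5)
proof (induction s1 rule: dec_induct)
  case base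
  have "{s. s0 \<le> s \<and> s < s0 \<and> swap_pos P s = j \<and> between X Y (swapped P s)} = {}" by auto
  then show ?case by simp
next
  case (step m)
  let ?E = "\<lambda>t. {s. s0 \<le> s \<and> s < t \<and> swap_pos P s = j \<and> between X Y (swapped P s)}"
  have IH: "card (?E m) + card {y\<in>Y. pos s0 y < Suc j} = card {y\<in>Y. pos m y < Suc j}"
    using step by simp
  have st: "card {y\<in>Y. pos (Suc m) y < Suc j} =
    card {y\<in>Y. pos m y < Suc j} + (if swap_pos P m = j \<and> between X Y (swapped P m) then 1 else 0)"
    apply (rule phase_step) using step assms(3,4) H2 by auto
  have fE: "finite (?E m)" by (rule finite_subset[of _ "{..<m}"]) auto
  have "?E (Suc m) = (if swap_pos P m = j \<and> between X Y (swapped P m) then insert m (?E m) else ?E m)"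
    using step.hyps by (auto simp: less_Suc_eq)
  hence "card (?E (Suc m)) = card (?E m) + (if swap_pos P m = j \<and> between X Y (swapped P m) then 1 else 0)"
    using fE by simp
  then show ?case using IH st by simp
qed


lemma swapped_sub: "s < N \<Longrightarrow> swapped P s \<subseteq> S"
  using swapped_eq[of s] sw_in[of s] by auto

lemma before_bound:
  assumes "t \<le> N" "e \<in> S" "M \<subseteq> S" "\<And>m. m \<in> M \<Longrightarrow> pos t m < pos t e"
  shows "card M \<le> pos t e"
proof -
  have "pos t ` M \<subseteq> {..<pos t e}" using assms by auto
  hence "card (pos t ` M) \<le> pos t e" using card_mono[of "{..<pos t e}"] by fastforce
  moreover have "card (pos t ` M) = card M"
    using card_image[OF inj_on_subset[OF pos_inj[OF assms(1)] assms(3)]] .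
  ultimately show ?thesis by simp
qed

lemma after_bound:
  assumes "t \<le> N" "e \<in> S" "M \<subseteq> S" "\<And>m. m \<in> M \<Longrightarrow> pos t e < pos t m"
  shows "card M + Suc (pos t e) \<le> n"
proof -
  have "pos t ` M \<subseteq> {Suc (pos t e)..<n}" using assms pos_lt[OF assms(1)] by force
  hence "card (pos t ` M) \<le> n - Suc (pos t e)" using card_mono[of "{Suc (pos t e)..<n}"] by fastforce
  moreover have "card (pos t ` M) = card M"
    using card_image[OF inj_on_subset[OF pos_inj[OF assms(1)] assms(3)]] .
  moreover have "pos t e < n" using pos_lt[OF assms(1,2)] by simp
  ultimately show ?thesis by simp
qed

lemma block_img:
  assumes "t \<le> N" "U \<subseteq> S" "card U = hi - lo" "pos t ` U \<subseteq> {lo..<hi}"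
  shows "pos t ` U = {lo..<hi}"
proof -
  have "card (pos t ` U) = card U"
    using card_image[OF inj_on_subset[OF pos_inj[OF assms(1)] assms(2)]] .
  thus ?thesis using card_subset_eq[OF _ assms(4)] assms(3) by simp
qed

lemma cnt_block:
  assumes "t \<le> N" "Y \<subseteq> S" "pos t ` Y = {lo..<hi}"
  shows "card {y\<in>Y. pos t y < p} = min hi p - lo"
proof -
  have "pos t ` {y\<in>Y. pos t y < p} = {i\<in>{lo..<hi}. i < p}" using assms(3) by auto
  moreover have "card (pos t ` {y\<in>Y. pos t y < p}) = card {y\<in>Y. pos t y < p}"
    by (rule card_image) (rule inj_on_subset[OF pos_inj[OF assms(1)]], use assms(2) in auto)
  moreover have "{i\<in>{lo..<hi}. i < p} = {lo..<min hi p}" by auto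
  ultimately show ?thesis by simp
qed

lemma layout3:
  assumes "t \<le> N" "n = 30" "S = U \<union> V \<union> W" "U \<inter> V = {}" "U \<inter> W = {}" "V \<inter> W = {}"
    "card U = 10" "card V = 10" "card W = 10"
    "\<And>u v. u \<in> U \<Longrightarrow> v \<in> V \<Longrightarrow> pos t u < pos t v"
    "\<And>u w. u \<in> U \<Longrightarrow> w \<in> W \<Longrightarrow> pos t u < pos t w"
    "\<And>v w. v \<in> V \<Longrightarrow> w \<in> W \<Longrightarrow> pos t v < pos t w"
  shows "pos t ` U = {0..<10}" "pos t ` V = {10..<20}" "pos t ` W = {20..<30}"
proof -
  have fin: "finite S" by simp
  have fU: "finite U" "finite V" "finite W" using fin assms(3) finite_subset by auto
  have cVW: "card (V \<union> W) = 20" using card_Un_disjoint[of V W] fU assms by simp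
  have cUV: "card (U \<union> V) = 20" using card_Un_disjoint[of U V] fU assms by simp
  have "pos t ` U \<subseteq> {0..<10}"
  proof
    fix i assume "i \<in> pos t ` U"
    then obtain u where u: "u \<in> U" "i = pos t u" by auto
    have "card (V \<union> W) + Suc (pos t u) \<le> n"
      by (rule after_bound) (use assms u in auto)
    thus "i \<in> {0..<10}" using cVW u assms(2) by simp
  qed
  thus "pos t ` U = {0..<10}" using block_img[OF assms(1), of U 10 0] assms by auto
  have "pos t ` V \<subseteq> {10..<20}"
  proof
    fix i assume "i \<in> pos t ` V"
    then obtain v where v: "v \<in> V" "i = pos t v" by auto
    have "card W + Suc (pos t v) \<le> n"
      by (rule after_bound) (use assms v in auto)
    moreover have "card U \<le> pos t v"
      by (rule before_bound) (use assms v in auto)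
    ultimately show "i \<in> {10..<20}" using v assms by simp
  qed
  thus "pos t ` V = {10..<20}" using block_img[OF assms(1), of V 20 10] assms by auto
  have "pos t ` W \<subseteq> {20..<30}"
  proof
    fix i assume "i \<in> pos t ` W"
    then obtain w where w: "w \<in> W" "i = pos t w" by auto
    have "card (U \<union> V) \<le> pos t w"
      by (rule before_bound) (use assms w in auto)
    moreover have "pos t w < n" using pos_lt[OF assms(1)] w assms(3) by auto
    ultimately show "i \<in> {20..<30}" using w cUV assms(2) by simp
  qed
  thus "pos t ` W = {20..<30}" using block_img[OF assms(1), of W 30 20] assms by auto
qed


lemma ord_flip:
  assumes "t \<le> N" "u \<in> S" "v \<in> S" "u \<noteq> v" "pos 0 v < pos 0 u" "sig u v < t"
  shows "pos t u < pos t v"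
  using ord_at[OF assms(1-4)] assms(5,6) by simp

lemma ord_keep:
  assumes "t \<le> N" "u \<in> S" "v \<in> S" "u \<noteq> v" "pos 0 u < pos 0 v" "\<not> sig u v < t"
  shows "pos t u < pos t v"
  using ord_at[OF assms(1-4)] assms(5,6) by simp

end


lemma c30: "(30::nat) choose 2 = 435" by (simp add: choose_two)

lemma nth3:
  assumes "i < 30" "length la = 10" "length lb = 10" "length lc = 10"
  shows "(la @ lb @ lc) ! i \<in> (if i < 10 then set la else if i < 20 then set lb else set lc)"
  using assms by (auto simp: nth_append)

lemma excl:
  assumes "A \<inter> B = {}" "A \<inter> C = {}" "B \<inter> C = {}"
  shows "\<not> (between A B e \<and> between A C e)" "\<not> (between A B e \<and> between B C e)"
    "\<not> (between A C e \<and> between B C e)"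
  using assms unfolding between_def by (auto simp: doubleton_eq_iff)

lemma bichrom:
  assumes "A \<inter> B = {}" "A \<inter> C = {}" "B \<inter> C = {}" "u \<in> A \<union> B \<union> C" "v \<in> A \<union> B \<union> C"
  shows "bichromatic A B C {u,v} \<longleftrightarrow> between A B {u,v} \<or> between A C {u,v} \<or> between B C {u,v}"
  using assms unfolding between_def bichromatic_def by (auto simp: doubleton_eq_iff)


theorem corollary2:
  fixes P :: "'a list list" and A B C :: "'a set"
  assumes "three_decomposable 30 P A B C"
  shows "\<forall>k \<in> {11, 12, 13, 14}. N_bi 30 k P A B C = 30"
proof -
  have td: "3 dvd (30::nat) \<and> half_period 30 P \<and>
     (\<exists>a b c :: nat \<Rightarrow> 'a.
        A = a ` {1..30 div 3} \<and> B = b ` {1..30 div 3} \<and> C = c ` {1..30 div 3} \<and>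
        P ! 0 = rev (map a [1..<30 div 3 + 1]) @ map b [1..<30 div 3 + 1] @ map c [1..<30 div 3 + 1]) \<and>
     (\<forall>s < 30 choose 2. \<forall>t < 30 choose 2.
        between A B (swapped P s) \<and> between C (A \<union> B) (swapped P t) \<longrightarrow> s < t) \<and>
     (\<forall>s < 30 choose 2. \<forall>t < 30 choose 2.
        between A C (swapped P s) \<and> between B C (swapped P t) \<longrightarrow> s < t)"
    using assms unfolding three_decomposable_def .
  hence hpP: "half_period 30 P" by blast
  from td have ex: "\<exists>a b c :: nat \<Rightarrow> 'a.
        A = a ` {1..30 div 3} \<and> B = b ` {1..30 div 3} \<and> C = c ` {1..30 div 3} \<and>
        P ! 0 = rev (map a [1..<30 div 3 + 1]) @ map b [1..<30 div 3 + 1] @ map c [1..<30 div 3 + 1]"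
    by blast
  from td have c1': "\<forall>s < 30 choose 2. \<forall>t < 30 choose 2.
        between A B (swapped P s) \<and> between C (A \<union> B) (swapped P t) \<longrightarrow> s < t" by blast
  from td have c2': "\<forall>s < 30 choose 2. \<forall>t < 30 choose 2.
        between A C (swapped P s) \<and> between B C (swapped P t) \<longrightarrow> s < t" by blast
  have c1: "\<And>s t. s < 435 \<Longrightarrow> t < 435 \<Longrightarrow> between A B (swapped P s) \<Longrightarrow> between C (A \<union> B) (swapped P t) \<Longrightarrow> s < t"
    using c1' unfolding c30 by blast
  have c2: "\<And>s t. s < 435 \<Longrightarrow> t < 435 \<Longrightarrow> between A C (swapped P s) \<Longrightarrow> between B C (swapped P t) \<Longrightarrow> s < t"
    using c2' unfolding c30 by blast
  obtain a b c :: "nat \<Rightarrow> 'a" where abc: "A = a ` {1..10}" "B = b ` {1..10}" "C = c ` {1..10}"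
    "P ! 0 = rev (map a [1..<11]) @ map b [1..<11] @ map c [1..<11]"
    using ex by auto
  have hp0: "length P = Suc 435" "\<forall>\<pi>\<in>set P. distinct \<pi> \<and> length \<pi> = 30"
    "\<forall>s < 435. \<exists>j. Suc j < 30 \<and> P ! Suc s = adj_swap (P ! s) j"
    "\<forall>x\<in>set (P ! 0). \<forall>y\<in>set (P ! 0). x \<noteq> y \<longrightarrow> card {s. s < 435 \<and> swapped P s = {x, y}} = 1"
    using hpP unfolding half_period_def by (auto simp: c30)
  interpret H: hp P 30 435
  proof
    show "length P = Suc 435" using hp0 by simp
    fix s assume "s \<le> (435::nat)"
    hence "P!s \<in> set P" using hp0(1) by simp
    thus "distinct (P!s)" "length (P!s) = 30" using hp0(2) by auto
  next
    fix s assume "s < (435::nat)" thus "\<exists>j. Suc j < 30 \<and> P ! Suc s = adj_swap (P ! s) j" using hp0(3) by auto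
  next
    fix x y assume "x \<in> set (P!0)" "y \<in> set (P!0)" "x \<noteq> y"
    thus "card {s. s < 435 \<and> swapped P s = {x, y}} = 1" using hp0(4) by auto
  qed
  define la where "la = rev (map a [1..<11])"
  define lb where "lb = map b [1..<11]"
  define lc where "lc = map c [1..<11]"
  have P0: "P!0 = la @ lb @ lc" using abc la_def lb_def lc_def by simp
  have lens: "length la = 10" "length lb = 10" "length lc = 10" using la_def lb_def lc_def by auto
  have sets: "set la = A" "set lb = B" "set lc = C" using abc la_def lb_def lc_def
    by (auto simp: atLeastLessThanSuc_atLeastAtMost)
  have d0: "distinct (P!0)" using H.dist by simp
  have dl: "distinct la" "distinct lb" "distinct lc" using d0 P0 by auto
  have disj: "A \<inter> B = {}" "A \<inter> C = {}" "B \<inter> C = {}" using d0 P0 sets by auto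
  have cards: "card A = 10" "card B = 10" "card C = 10"
    using distinct_card[OF dl(1)] distinct_card[OF dl(2)] distinct_card[OF dl(3)] lens sets by auto
  have SS: "H.S = A \<union> B \<union> C" using P0 sets by auto
  have p0: "\<And>x. x \<in> H.S \<Longrightarrow> (x \<in> A \<longleftrightarrow> H.pos 0 x < 10) \<and> (x \<in> B \<longleftrightarrow> 10 \<le> H.pos 0 x \<and> H.pos 0 x < 20)
      \<and> (x \<in> C \<longleftrightarrow> 20 \<le> H.pos 0 x)"
  proof -
    fix x assume x: "x \<in> H.S"
    have pl: "H.pos 0 x < 30" "P!0!H.pos 0 x = x" using H.pos_lt[of 0 x] x by auto
    have "x \<in> (if H.pos 0 x < 10 then A else if H.pos 0 x < 20 then B else C)"
      using nth3[OF pl(1) lens] pl(2) P0 sets by (auto split: if_splits)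
    thus "(x \<in> A \<longleftrightarrow> H.pos 0 x < 10) \<and> (x \<in> B \<longleftrightarrow> 10 \<le> H.pos 0 x \<and> H.pos 0 x < 20)
      \<and> (x \<in> C \<longleftrightarrow> 20 \<le> H.pos 0 x)" using disj by (auto split: if_splits)
  qed
  have AS: "A \<subseteq> H.S" "B \<subseteq> H.S" "C \<subseteq> H.S" using SS by auto
  have img0: "H.pos 0 ` B = {10..<20}" "H.pos 0 ` C = {20..<30}"
    using H.block_img[of 0 B 20 10] H.block_img[of 0 C 30 20] AS cards p0 H.pos_lt[of 0] by (force+)
  have b1: "b 1 \<in> B" "c 1 \<in> C" using abc by auto
  have bc1: "b 1 \<noteq> c 1" using b1 disj by auto
  define T1 where "T1 = Min {t. t < 435 \<and> between C (A \<union> B) (swapped P t)}"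
  define T2 where "T2 = Min {t. t < 435 \<and> between B C (swapped P t)}"
  have sg: "H.sig (b 1) (c 1) < 435" "swapped P (H.sig (b 1) (c 1)) = {b 1, c 1}"
    using H.sig(1,2)[of "b 1" "c 1"] b1 bc1 AS by auto
  have ne1: "H.sig (b 1) (c 1) \<in> {t. t < 435 \<and> between C (A \<union> B) (swapped P t)}"
    using sg b1 unfolding between_def by (auto simp: insert_commute)
  have ne2: "H.sig (b 1) (c 1) \<in> {t. t < 435 \<and> between B C (swapped P t)}"
    using sg b1 unfolding between_def by auto
  have T1: "T1 < 435" "between C (A \<union> B) (swapped P T1)"
    "\<And>t. t < 435 \<Longrightarrow> between C (A \<union> B) (swapped P t) \<Longrightarrow> T1 \<le> t"
    using Min_in[of "{t. t < 435 \<and> between C (A \<union> B) (swapped P t)}"] ne1 T1_def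
    Min_le[of "{t. t < 435 \<and> between C (A \<union> B) (swapped P t)}"] by auto
  have T2: "T2 < 435" "between B C (swapped P T2)"
    "\<And>t. t < 435 \<Longrightarrow> between B C (swapped P t) \<Longrightarrow> T2 \<le> t"
    using Min_in[of "{t. t < 435 \<and> between B C (swapped P t)}"] ne2 T2_def
    Min_le[of "{t. t < 435 \<and> between B C (swapped P t)}"] by auto
  have T12: "T1 \<le> T2"
  proof -
    have "between C (A \<union> B) (swapped P T2)" using T2(2) unfolding between_def
      by (auto simp: insert_commute)
    thus ?thesis using T1(3) T2(1) by simp
  qed
  have sAB: "\<And>x y. x \<in> A \<Longrightarrow> y \<in> B \<Longrightarrow> H.sig x y < T1 \<and> H.sig y x < T1"
  proof -
    fix x y assume xy: "x \<in> A" "y \<in> B"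
    have ne: "x \<noteq> y" using xy disj by auto
    have s1: "H.sig x y < 435" "swapped P (H.sig x y) = {x,y}" using H.sig(1,2)[of x y] xy ne AS by auto
    have s2: "H.sig y x < 435" "swapped P (H.sig y x) = {y,x}" using H.sig(1,2)[of y x] xy ne AS by auto
    have "between A B (swapped P (H.sig x y))" "between A B (swapped P (H.sig y x))"
      using s1 s2 xy unfolding between_def by (auto simp: insert_commute)
    thus "H.sig x y < T1 \<and> H.sig y x < T1" using c1 T1(1,2) s1(1) s2(1) by blast
  qed
  have sAC: "\<And>x y. x \<in> A \<Longrightarrow> y \<in> C \<Longrightarrow> T1 \<le> H.sig x y \<and> H.sig x y < T2 \<and> T1 \<le> H.sig y x \<and> H.sig y x < T2"
  proof -
    fix x y assume xy: "x \<in> A" "y \<in> C"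
    have ne: "x \<noteq> y" using xy disj by auto
    have s1: "H.sig x y < 435" "swapped P (H.sig x y) = {x,y}" using H.sig(1,2)[of x y] xy ne AS by auto
    have s2: "H.sig y x < 435" "swapped P (H.sig y x) = {y,x}" using H.sig(1,2)[of y x] xy ne AS by auto
    have "between A C (swapped P (H.sig x y))" "between A C (swapped P (H.sig y x))"
      "between C (A \<union> B) (swapped P (H.sig x y))" "between C (A \<union> B) (swapped P (H.sig y x))"
      using s1 s2 xy unfolding between_def by (auto simp: insert_commute)
    thus "T1 \<le> H.sig x y \<and> H.sig x y < T2 \<and> T1 \<le> H.sig y x \<and> H.sig y x < T2"
      using c2 T2(1,2) T1(3) s1(1) s2(1) by blast
  qed
  have sBC: "\<And>x y. x \<in> B \<Longrightarrow> y \<in> C \<Longrightarrow> T2 \<le> H.sig x y \<and> T2 \<le> H.sig y x"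
  proof -
    fix x y assume xy: "x \<in> B" "y \<in> C"
    have ne: "x \<noteq> y" using xy disj by auto
    have s1: "H.sig x y < 435" "swapped P (H.sig x y) = {x,y}" using H.sig(1,2)[of x y] xy ne AS by auto
    have s2: "H.sig y x < 435" "swapped P (H.sig y x) = {y,x}" using H.sig(1,2)[of y x] xy ne AS by auto
    have "between B C (swapped P (H.sig x y))" "between B C (swapped P (H.sig y x))"
      using s1 s2 xy unfolding between_def by (auto simp: insert_commute)
    thus "T2 \<le> H.sig x y \<and> T2 \<le> H.sig y x" using T2(3) s1(1) s2(1) by blast
  qed
  have sN: "\<And>x y. x \<in> H.S \<Longrightarrow> y \<in> H.S \<Longrightarrow> x \<noteq> y \<Longrightarrow> H.sig x y < 435"
    using H.sig(1) by blast
  have neq: "\<And>x y. x \<in> A \<Longrightarrow> y \<in> B \<Longrightarrow> x \<noteq> y" "\<And>x y. x \<in> A \<Longrightarrow> y \<in> C \<Longrightarrow> x \<noteq> y"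
    "\<And>x y. x \<in> B \<Longrightarrow> y \<in> C \<Longrightarrow> x \<noteq> y" using disj by auto
  have T1le: "T1 \<le> 435" "T2 \<le> 435" using T1(1) T2(1) by auto
  have pA: "\<And>x. x \<in> A \<Longrightarrow> H.pos 0 x < 10" using p0 AS by blast
  have pB: "\<And>x. x \<in> B \<Longrightarrow> 10 \<le> H.pos 0 x \<and> H.pos 0 x < 20" using p0 AS by blast
  have pC: "\<And>x. x \<in> C \<Longrightarrow> 20 \<le> H.pos 0 x" using p0 AS by blast
  have mS: "\<And>x. x \<in> A \<Longrightarrow> x \<in> H.S" "\<And>x. x \<in> B \<Longrightarrow> x \<in> H.S" "\<And>x. x \<in> C \<Longrightarrow> x \<in> H.S"
    using AS by auto
  have L1_o0: "\<And>u v. u \<in> B \<Longrightarrow> v \<in> A \<Longrightarrow> H.pos T1 u < H.pos T1 v"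
  proof -
    fix u v assume uv: "u \<in> B" "v \<in> A"
    show "H.pos T1 u < H.pos T1 v"
      apply (rule H.ord_flip[OF T1le(1) mS(2)[OF uv(1)] mS(1)[OF uv(2)]])
      using neq(1)[of v u] uv pA[of v] pB[of u] sAB[of v u] by auto
  qed
  have L1_o1: "\<And>u v. u \<in> B \<Longrightarrow> v \<in> C \<Longrightarrow> H.pos T1 u < H.pos T1 v"
  proof -
    fix u v assume uv: "u \<in> B" "v \<in> C"
    show "H.pos T1 u < H.pos T1 v"
      apply (rule H.ord_keep[OF T1le(1) mS(2)[OF uv(1)] mS(3)[OF uv(2)]])
      using neq(3)[of u v] uv pC[of v] pB[of u] sBC[of u v] T12 by auto
  qed
  have L1_o2: "\<And>u v. u \<in> A \<Longrightarrow> v \<in> C \<Longrightarrow> H.pos T1 u < H.pos T1 v"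
  proof -
    fix u v assume uv: "u \<in> A" "v \<in> C"
    show "H.pos T1 u < H.pos T1 v"
      apply (rule H.ord_keep[OF T1le(1) mS(1)[OF uv(1)] mS(3)[OF uv(2)]])
      using neq(2)[of u v] uv pC[of v] pA[of u] sAC[of u v] by auto
  qed
  have L1_s: "H.S = B \<union> A \<union> C" "B \<inter> A = {}" "B \<inter> C = {}" "A \<inter> C = {}" "card B = 10" "card A = 10" "card C = 10"
    using SS disj cards by auto
  have L1: "H.pos T1 ` B = {0..<10}" "H.pos T1 ` A = {10..<20}" "H.pos T1 ` C = {20..<30}"
    using H.layout3[OF T1le(1) _ L1_s L1_o0 L1_o1 L1_o2] by simp_all
  have L2_o0: "\<And>u v. u \<in> B \<Longrightarrow> v \<in> C \<Longrightarrow> H.pos T2 u < H.pos T2 v"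
  proof -
    fix u v assume uv: "u \<in> B" "v \<in> C"
    show "H.pos T2 u < H.pos T2 v"
      apply (rule H.ord_keep[OF T1le(2) mS(2)[OF uv(1)] mS(3)[OF uv(2)]])
      using neq(3)[of u v] uv pC[of v] pB[of u] sBC[of u v] by auto
  qed
  have L2_o1: "\<And>u v. u \<in> B \<Longrightarrow> v \<in> A \<Longrightarrow> H.pos T2 u < H.pos T2 v"
  proof -
    fix u v assume uv: "u \<in> B" "v \<in> A"
    show "H.pos T2 u < H.pos T2 v"
      apply (rule H.ord_flip[OF T1le(2) mS(2)[OF uv(1)] mS(1)[OF uv(2)]])
      using neq(1)[of v u] uv pA[of v] pB[of u] sAB[of v u] T12 by auto
  qed
  have L2_o2: "\<And>u v. u \<in> C \<Longrightarrow> v \<in> A \<Longrightarrow> H.pos T2 u < H.pos T2 v"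
  proof -
    fix u v assume uv: "u \<in> C" "v \<in> A"
    show "H.pos T2 u < H.pos T2 v"
      apply (rule H.ord_flip[OF T1le(2) mS(3)[OF uv(1)] mS(1)[OF uv(2)]])
      using neq(2)[of v u] uv pA[of v] pC[of u] sAC[of v u] by auto
  qed
  have L2_s: "H.S = B \<union> C \<union> A" "B \<inter> C = {}" "B \<inter> A = {}" "C \<inter> A = {}" "card B = 10" "card C = 10" "card A = 10"
    using SS disj cards by auto
  have L2: "H.pos T2 ` B = {0..<10}" "H.pos T2 ` C = {10..<20}" "H.pos T2 ` A = {20..<30}"
    using H.layout3[OF T1le(2) _ L2_s L2_o0 L2_o1 L2_o2] by simp_all
  have L3_o0: "\<And>u v. u \<in> C \<Longrightarrow> v \<in> B \<Longrightarrow> H.pos 435 u < H.pos 435 v"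
  proof -
    fix u v assume uv: "u \<in> C" "v \<in> B"
    show "H.pos 435 u < H.pos 435 v"
      apply (rule H.ord_flip[OF _ mS(3)[OF uv(1)] mS(2)[OF uv(2)]])
      using neq(3)[of v u] uv pB[of v] pC[of u] sN[OF mS(3)[OF uv(1)] mS(2)[OF uv(2)]] by auto
  qed
  have L3_o1: "\<And>u v. u \<in> C \<Longrightarrow> v \<in> A \<Longrightarrow> H.pos 435 u < H.pos 435 v"
  proof -
    fix u v assume uv: "u \<in> C" "v \<in> A"
    show "H.pos 435 u < H.pos 435 v"
      apply (rule H.ord_flip[OF _ mS(3)[OF uv(1)] mS(1)[OF uv(2)]])
      using neq(2)[of v u] uv pA[of v] pC[of u] sN[OF mS(3)[OF uv(1)] mS(1)[OF uv(2)]] by auto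
  qed
  have L3_o2: "\<And>u v. u \<in> B \<Longrightarrow> v \<in> A \<Longrightarrow> H.pos 435 u < H.pos 435 v"
  proof -
    fix u v assume uv: "u \<in> B" "v \<in> A"
    show "H.pos 435 u < H.pos 435 v"
      apply (rule H.ord_flip[OF _ mS(2)[OF uv(1)] mS(1)[OF uv(2)]])
      using neq(1)[of v u] uv pA[of v] pB[of u] sN[OF mS(2)[OF uv(1)] mS(1)[OF uv(2)]] by auto
  qed
  have L3_s: "H.S = C \<union> B \<union> A" "C \<inter> B = {}" "C \<inter> A = {}" "B \<inter> A = {}" "card C = 10" "card B = 10" "card A = 10"
    using SS disj cards by auto
  have L3: "H.pos 435 ` C = {0..<10}" "H.pos 435 ` B = {10..<20}" "H.pos 435 ` A = {20..<30}"
    using H.layout3[OF order.refl _ L3_s L3_o0 L3_o1 L3_o2] by simp_all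
  have cAB: "\<And>j. 10 \<le> j \<Longrightarrow> j \<le> 18 \<Longrightarrow>
    card {s. s < 435 \<and> swap_pos P s = j \<and> between A B (swapped P s)} = 19 - j"
  proof -
    fix j :: nat assume j: "10 \<le> j" "j \<le> 18"
    have ph: "card {s. 0 \<le> s \<and> s < T1 \<and> swap_pos P s = j \<and> between A B (swapped P s)}
      + card {y\<in>B. H.pos 0 y < Suc j} = card {y\<in>B. H.pos T1 y < Suc j}"
    proof (rule H.phase)
      show "0 \<le> T1" "T1 \<le> 435" "B \<subseteq> H.S" "A \<inter> B = {}" using T1le AS disj by auto
      fix s z w assume h: "0 \<le> s" "s < T1" "swapped P s = {z,w}" "w \<in> B"
      have "z \<in> H.S" using H.swapped_sub[of s] h T1(1) by auto
      moreover have "z \<notin> C"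
      proof
        assume "z \<in> C"
        hence "between C (A \<union> B) (swapped P s)" using h unfolding between_def by auto
        thus False using T1(3)[of s] h T1(1) by simp
      qed
      ultimately show "z \<in> A \<union> B" using SS by auto
    next
      fix x y assume "x \<in> A" "y \<in> B"
      thus "H.pos 0 x < H.pos 0 y" using pA[of x] pB[of y] by auto
    qed
    have e: "{s. 0 \<le> s \<and> s < T1 \<and> swap_pos P s = j \<and> between A B (swapped P s)} =
      {s. s < 435 \<and> swap_pos P s = j \<and> between A B (swapped P s)}"
      using c1[OF _ T1(1) _ T1(2)] T1(1) by auto
    have f0: "card {y\<in>B. H.pos 0 y < Suc j} = min 20 (Suc j) - 10"
      by (rule H.cnt_block[OF _ AS(2) img0(1)]) simp
    have f1: "card {y\<in>B. H.pos T1 y < Suc j} = min 10 (Suc j) - 0"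
      by (rule H.cnt_block[OF T1le(1) AS(2) L1(1)])
    show "card {s. s < 435 \<and> swap_pos P s = j \<and> between A B (swapped P s)} = 19 - j"
      using ph e f0 f1 j by simp
  qed
  have cAC: "\<And>j. 10 \<le> j \<Longrightarrow> j \<le> 18 \<Longrightarrow>
    card {s. s < 435 \<and> swap_pos P s = j \<and> between A C (swapped P s)} = j - 9"
  proof -
    fix j :: nat assume j: "10 \<le> j" "j \<le> 18"
    have ph: "card {s. T1 \<le> s \<and> s < T2 \<and> swap_pos P s = j \<and> between A C (swapped P s)}
      + card {y\<in>C. H.pos T1 y < Suc j} = card {y\<in>C. H.pos T2 y < Suc j}"
    proof (rule H.phase)
      show "T1 \<le> T2" "T2 \<le> 435" "C \<subseteq> H.S" "A \<inter> C = {}" using T12 T1le AS disj by auto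
      fix s z w assume h: "T1 \<le> s" "s < T2" "swapped P s = {z,w}" "w \<in> C"
      have "z \<in> H.S" using H.swapped_sub[of s] h T2(1) by auto
      moreover have "z \<notin> B"
      proof
        assume "z \<in> B"
        hence "between B C (swapped P s)" using h unfolding between_def by auto
        thus False using T2(3)[of s] h T2(1) by simp
      qed
      ultimately show "z \<in> A \<union> C" using SS by auto
    next
      fix x y assume "x \<in> A" "y \<in> C"
      thus "H.pos 0 x < H.pos 0 y" using pA[of x] pC[of y] by auto
    qed
    have e: "{s. T1 \<le> s \<and> s < T2 \<and> swap_pos P s = j \<and> between A C (swapped P s)} =
      {s. s < 435 \<and> swap_pos P s = j \<and> between A C (swapped P s)}"
    proof -
      have "\<And>s. s < 435 \<Longrightarrow> between A C (swapped P s) \<Longrightarrow> T1 \<le> s \<and> s < T2"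
      proof -
        fix s assume h: "s < 435" "between A C (swapped P s)"
        have "between C (A \<union> B) (swapped P s)" using h(2) unfolding between_def
          by (auto simp: insert_commute)
        thus "T1 \<le> s \<and> s < T2" using T1(3) c2[OF h(1) T2(1) h(2) T2(2)] h(1) by simp
      qed
      thus ?thesis using T2(1) by auto
    qed
    have f0: "card {y\<in>C. H.pos T1 y < Suc j} = min 30 (Suc j) - 20"
      by (rule H.cnt_block[OF T1le(1) AS(3) L1(3)])
    have f1: "card {y\<in>C. H.pos T2 y < Suc j} = min 20 (Suc j) - 10"
      by (rule H.cnt_block[OF T1le(2) AS(3) L2(2)])
    show "card {s. s < 435 \<and> swap_pos P s = j \<and> between A C (swapped P s)} = j - 9"
      using ph e f0 f1 j by simp
  qed
  have cBC: "\<And>j. 10 \<le> j \<Longrightarrow> j \<le> 18 \<Longrightarrow>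
    card {s. s < 435 \<and> swap_pos P s = j \<and> between B C (swapped P s)} = 19 - j"
  proof -
    fix j :: nat assume j: "10 \<le> j" "j \<le> 18"
    have ph: "card {s. T2 \<le> s \<and> s < 435 \<and> swap_pos P s = j \<and> between B C (swapped P s)}
      + card {y\<in>C. H.pos T2 y < Suc j} = card {y\<in>C. H.pos 435 y < Suc j}"
    proof (rule H.phase)
      show "T2 \<le> 435" "(435::nat) \<le> 435" "C \<subseteq> H.S" "B \<inter> C = {}" using T1le AS disj by auto
      fix s z w assume h: "T2 \<le> s" "s < 435" "swapped P s = {z,w}" "w \<in> C"
      have "z \<in> H.S" using H.swapped_sub[of s] h by auto
      moreover have "z \<notin> A"
      proof
        assume "z \<in> A"
        hence "between A C (swapped P s)" using h unfolding between_def by auto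
        thus False using c2[OF h(2) T2(1) _ T2(2)] h by simp
      qed
      ultimately show "z \<in> B \<union> C" using SS by auto
    next
      fix x y assume "x \<in> B" "y \<in> C"
      thus "H.pos 0 x < H.pos 0 y" using pB[of x] pC[of y] by auto
    qed
    have e: "{s. T2 \<le> s \<and> s < 435 \<and> swap_pos P s = j \<and> between B C (swapped P s)} =
      {s. s < 435 \<and> swap_pos P s = j \<and> between B C (swapped P s)}"
      using T2(3) by auto
    have f0: "card {y\<in>C. H.pos T2 y < Suc j} = min 20 (Suc j) - 10"
      by (rule H.cnt_block[OF T1le(2) AS(3) L2(2)])
    have f1: "card {y\<in>C. H.pos 435 y < Suc j} = min 10 (Suc j) - 0"
      by (rule H.cnt_block[OF _ AS(3) L3(1)]) simp
    show "card {s. s < 435 \<and> swap_pos P s = j \<and> between B C (swapped P s)} = 19 - j"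
      using ph e f0 f1 j by simp
  qed
  define E where "E X Y j = {s. s < 435 \<and> swap_pos P s = j \<and> between X Y (swapped P s)}" for X Y j
  define G where "G j = {s. s < 435 \<and> swap_pos P s = j \<and> (between A B (swapped P s) \<or>
      between A C (swapped P s) \<or> between B C (swapped P s))}" for j
  have fE: "\<And>X Y j. finite (E X Y j)" unfolding E_def by (rule finite_subset[of _ "{..<435}"]) auto
  have cG: "\<And>j. 10 \<le> j \<Longrightarrow> j \<le> 18 \<Longrightarrow> card (G j) = 29 - j"
  proof -
    fix j :: nat assume j: "10 \<le> j" "j \<le> 18"
    have "G j = (E A B j \<union> E A C j) \<union> E B C j" unfolding G_def E_def by auto
    moreover have "E A B j \<inter> E A C j = {}" "(E A B j \<union> E A C j) \<inter> E B C j = {}"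
      unfolding E_def using excl[OF disj] by auto
    ultimately have "card (G j) = card (E A B j) + card (E A C j) + card (E B C j)"
      using fE card_Un_disjoint by (simp add: card_Un_disjoint)
    thus "card (G j) = 29 - j" using cAB[OF j] cAC[OF j] cBC[OF j] j unfolding E_def by simp
  qed
  have main: "\<And>k. 11 \<le> k \<Longrightarrow> k \<le> 14 \<Longrightarrow> N_bi 30 k P A B C = 30"
  proof -
    fix k :: nat assume k: "11 \<le> k" "k \<le> 14"
    have eq: "{s. s < 30 choose 2 \<and> critical 30 k P s \<and> bichromatic A B C (swapped P s)}
      = G (k - 1) \<union> G (29 - k)"
    proof -
      have "\<And>s. s < 435 \<Longrightarrow> bichromatic A B C (swapped P s) \<longleftrightarrow> (between A B (swapped P s) \<or>
        between A C (swapped P s) \<or> between B C (swapped P s))"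
      proof -
        fix s :: nat assume s: "s < 435"
        have "P!s!swap_pos P s \<in> A \<union> B \<union> C" "P!s!Suc (swap_pos P s) \<in> A \<union> B \<union> C"
          using H.sw_in[OF s] SS by auto
        thus "bichromatic A B C (swapped P s) \<longleftrightarrow> (between A B (swapped P s) \<or>
          between A C (swapped P s) \<or> between B C (swapped P s))"
          using bichrom[OF disj] H.swapped_eq[of s] by simp
      qed
      moreover have "\<And>s. critical 30 k P s \<longleftrightarrow> swap_pos P s = k - 1 \<or> swap_pos P s = 29 - k"
        unfolding critical_def using k by auto
      ultimately show ?thesis unfolding G_def c30 by auto
    qed
    have fG: "\<And>j. finite (G j)" unfolding G_def by (rule finite_subset[of _ "{..<435}"]) auto
    have dG: "G (k - 1) \<inter> G (29 - k) = {}" unfolding G_def using k by auto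
    have "N_bi 30 k P A B C = card (G (k - 1) \<union> G (29 - k))" unfolding N_bi_def eq ..
    also have "\<dots> = card (G (k - 1)) + card (G (29 - k))" using fG dG by (simp add: card_Un_disjoint)
    also have "\<dots> = 30" using cG[of "k - 1"] cG[of "29 - k"] k by simp
    finally show "N_bi 30 k P A B C = 30" .
  qed
  show ?thesis using main by auto
qed
end
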